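(* Let $P\subseteq\mathbb{R}^n$ be a polytope and $H\subseteq\mathbb{R}^n$ a hyperplane, and let $P_1,P_2$ be the two halves of $P$ with respect to $H$ (assumed nonempty). Then in $\mathcal{P}(\mathbb{R}^n)$ \[ \chi_{\mathcal{F}}(P)+\chi_{\mathcal{F}}(P\cap H)=\chi_{\mathcal{F}}(P_1)+\chi_{\mathcal{F}}(P_2). \] Moreover, if the identity $*Q=-\chi_{\mathcal{F}}(Q)$ holds for three of the four polytopes $P,P_1,P_2,P\cap H$, then it holds for the fourth.
   Context: $\mathcal{P}(\mathbb{R}^n)$ is the Grothendieck group of polytopes (convex hulls of nonempty finite sets) under Minkowski sum; $*Q=\{-q:q\in Q\}$. For $H=\{x:\phi(x)=c\}$ ($\phi$ linear nonzero), the halves of $P$ are $P_+=\{p\in P:\phi(p)\ge c\}$ and $P_-=\{p\in P:\phi(p)\le c\}$. A face of $Q$ is $\{q\in Q:\psi(q)=\max_Q\psi\}$ for linear $\psi$; $\mathcal{F}(Q)$ is the set of faces including $Q$; $\chi_{\mathcal{F}}(Q)=\sum_{F\in\mathcal{F}(Q)}(-1)^{\dim F}F$, with $\chi_{\mathcal{F}}(\emptyset)=0$. *)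

theory Defs
  imports "HOL-Analysis.Analysis"
begin

typedef (overloaded) 'a ppoly = "{P :: 'a::euclidean_space set. polytope P \<and> P \<noteq> {}}"
  morphisms pset Abs_ppoly
  by (rule exI[of _ "{0}"]) (simp add: polytope_sing)

lemma polytope_set_plus:
  assumes "polytope A" "polytope B" shows "polytope (A + B)"
proof -
  obtain u v where "finite u" "A = convex hull u" "finite v" "B = convex hull v"
    using assms by (auto simp: polytope_def)
  then show ?thesis
    by (auto simp: polytope_def convex_hull_set_plus intro!: exI[of _ "u + v"] finite_set_plus)
qed

lemma pset_plus_mem: "polytope (pset a + pset b) \<and> pset a + pset b \<noteq> {}"
  using pset[of a] pset[of b] polytope_set_plus by (auto simp: set_plus_def)

definition ppadd :: "'a::euclidean_space ppoly \<Rightarrow> 'a ppoly \<Rightarrow> 'a ppoly" where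
  "ppadd a b = Abs_ppoly (pset a + pset b)"

lemma pset_ppadd: "pset (ppadd a b) = pset a + pset b"
  unfolding ppadd_def using pset_plus_mem Abs_ppoly_inverse by blast

definition ppzero :: "'a::euclidean_space ppoly" where
  "ppzero = Abs_ppoly {0}"

lemma pset_ppzero: "pset ppzero = {0}"
  unfolding ppzero_def by (rule Abs_ppoly_inverse) (simp add: polytope_sing)

text \<open>Standard group completion: formal differences (a,b) with
  (a,b) ~ (c,d) iff a+d+e = b+c+e for some e.\<close>

definition grot_rel :: "('a::euclidean_space ppoly \<times> 'a ppoly) \<Rightarrow> ('a ppoly \<times> 'a ppoly) \<Rightarrow> bool" where
  "grot_rel x y \<longleftrightarrow> (\<exists>e. pset (fst x) + pset (snd y) + pset e = pset (snd x) + pset (fst y) + pset e)"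

lemma grot_rel_equivp: "equivp grot_rel"
proof (rule equivpI)
  show "reflp grot_rel"
    by (auto simp: reflp_def grot_rel_def add.commute)
  show "symp grot_rel"
    by (auto simp: symp_def grot_rel_def) (metis add.commute)
  show "transp grot_rel"
  proof (rule transpI)
    fix x y z
    assume "grot_rel x y" "grot_rel y z"
    then obtain e f where e: "pset (fst x) + pset (snd y) + pset e = pset (snd x) + pset (fst y) + pset e"
      and f: "pset (fst y) + pset (snd z) + pset f = pset (snd y) + pset (fst z) + pset f"
      by (auto simp: grot_rel_def)
    let ?g = "ppadd (ppadd (fst y) (snd y)) (ppadd e f)"
    have "pset (fst x) + pset (snd z) + pset ?g
        = (pset (fst x) + pset (snd y) + pset e) + (pset (fst y) + pset (snd z) + pset f)"
      by (simp add: pset_ppadd ac_simps)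
    also have "\<dots> = (pset (snd x) + pset (fst y) + pset e) + (pset (snd y) + pset (fst z) + pset f)"
      using e f by simp
    also have "\<dots> = pset (snd x) + pset (fst z) + pset ?g"
      by (simp add: pset_ppadd ac_simps)
    finally have "pset (fst x) + pset (snd z) + pset ?g = pset (snd x) + pset (fst z) + pset ?g" .
    then show "grot_rel x z" unfolding grot_rel_def by blast
  qed
qed

quotient_type (overloaded) 'a grot = "'a::euclidean_space ppoly \<times> 'a ppoly" / grot_rel
  by (rule grot_rel_equivp)

instantiation grot :: (euclidean_space) ab_group_add
begin

lift_definition zero_grot :: "'a grot" is "(ppzero, ppzero)" .

lift_definition plus_grot :: "'a grot \<Rightarrow> 'a grot \<Rightarrow> 'a grot"
  is "\<lambda>x y. (ppadd (fst x) (fst y), ppadd (snd x) (snd y))"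
proof -
  fix x x' y y' :: "'a ppoly \<times> 'a ppoly"
  assume "grot_rel x x'" "grot_rel y y'"
  then obtain e f where e: "pset (fst x) + pset (snd x') + pset e = pset (snd x) + pset (fst x') + pset e"
    and f: "pset (fst y) + pset (snd y') + pset f = pset (snd y) + pset (fst y') + pset f"
    by (auto simp: grot_rel_def)
  have "pset (fst x) + pset (fst y) + (pset (snd x') + pset (snd y')) + pset (ppadd e f)
      = (pset (fst x) + pset (snd x') + pset e) + (pset (fst y) + pset (snd y') + pset f)"
    by (simp add: pset_ppadd ac_simps)
  also have "\<dots> = (pset (snd x) + pset (fst x') + pset e) + (pset (snd y) + pset (fst y') + pset f)"
    using e f by simp
  also have "\<dots> = pset (snd x) + pset (snd y) + (pset (fst x') + pset (fst y')) + pset (ppadd e f)"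
    by (simp add: pset_ppadd ac_simps)
  finally show "grot_rel (ppadd (fst x) (fst y), ppadd (snd x) (snd y))
                         (ppadd (fst x') (fst y'), ppadd (snd x') (snd y'))"
    by (simp only: grot_rel_def fst_conv snd_conv pset_ppadd) (rule exI[of _ "ppadd e f"], simp only: pset_ppadd)
qed

lift_definition uminus_grot :: "'a grot \<Rightarrow> 'a grot" is "\<lambda>x. (snd x, fst x)"
  by (auto simp: grot_rel_def add.commute)

definition minus_grot :: "'a grot \<Rightarrow> 'a grot \<Rightarrow> 'a grot" where
  "minus_grot a b = a + - b"

instance
proof
  fix a b c :: "'a grot"
  show "a + b + c = a + (b + c)"
    by transfer (auto simp: grot_rel_def pset_ppadd ac_simps)
  show "a + b = b + a"
    by transfer (auto simp: grot_rel_def pset_ppadd ac_simps)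
  show "0 + a = a"
    by transfer (auto simp: grot_rel_def pset_ppadd pset_ppzero ac_simps)
  show "- a + a = 0"
    by transfer (auto simp: grot_rel_def pset_ppadd pset_ppzero ac_simps)
  show "a - b = a + - b"
    by (simp add: minus_grot_def)
qed

end

text \<open>The class [Q] of a nonempty polytope Q in the Grothendieck group
  (junk value 0 for sets that are not nonempty polytopes).\<close>

definition pclass :: "'a::euclidean_space set \<Rightarrow> 'a grot" where
  "pclass Q = (if polytope Q \<and> Q \<noteq> {} then abs_grot (Abs_ppoly Q, ppzero) else 0)"

text \<open>A face of Q: the set of maximisers in Q of a linear functional psi
  (psi = 0 gives Q itself).\<close>

definition faces :: "'a::euclidean_space set \<Rightarrow> 'a set set" where
  "faces Q = {{q \<in> Q. \<forall>q'\<in>Q. psi q' \<le> psi q} | psi :: 'a \<Rightarrow> real. linear psi}"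

definition chiF :: "'a::euclidean_space set \<Rightarrow> 'a grot" where
  "chiF Q = (if Q = {} then 0
             else (\<Sum>F\<in>faces Q. (if even (aff_dim F) then pclass F else - pclass F)))"

text \<open>The identity *Q = - chiF Q, where *Q = {-q. q in Q}.\<close>

definition star_identity :: "'a::euclidean_space set \<Rightarrow> bool" where
  "star_identity Q \<longleftrightarrow> pclass (uminus ` Q) = - chiF Q"

end

theory Submission
  imports Defs
begin

lemma cross_point:
  fixes a u v :: "'a::euclidean_space"
  assumes "a \<bullet> u > c" "a \<bullet> v < c"
  shows "\<exists>w \<in> open_segment u v. a \<bullet> w = c"
proof -
  define t where "t = (a \<bullet> u - c) / (a \<bullet> u - a \<bullet> v)"
  have d: "a \<bullet> u - a \<bullet> v > 0" using assms by simp
  have t0: "0 < t" and t1: "t < 1" using assms d by (auto simp: t_def divide_simps)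
  have uv: "u \<noteq> v" using assms by auto
  have "a \<bullet> ((1 - t) *\<^sub>R u + t *\<^sub>R v) = a \<bullet> u - t * (a \<bullet> u - a \<bullet> v)"
    by (simp add: inner_add_right algebra_simps)
  also have "\<dots> = c" using d by (simp add: t_def)
  finally show ?thesis using t0 t1 uv by (auto simp: in_segment intro!: bexI[of _ "(1 - t) *\<^sub>R u + t *\<^sub>R v"])
qed

lemma cross_point':
  fixes a u v :: "'a::euclidean_space"
  assumes "a \<bullet> u < c" "a \<bullet> v > c"
  shows "\<exists>w \<in> open_segment u v. a \<bullet> w = c"
  using cross_point[OF assms(2,1)] by (simp add: open_segment_commute)

lemma cross_point_closed:
  fixes a u v :: "'a::euclidean_space"
  assumes "a \<bullet> u \<ge> c" "a \<bullet> v \<le> c"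
  shows "\<exists>w \<in> closed_segment u v. a \<bullet> w = c"
proof (cases "a \<bullet> u = c \<or> a \<bullet> v = c")
  case True then show ?thesis by auto
next
  case False
  then obtain w where "w \<in> open_segment u v" "a \<bullet> w = c"
    using cross_point[of c a u v] assms by force
  then show ?thesis using segment_open_subset_closed by blast
qed

lemma linear_real_inner:
  fixes phi :: "'a::euclidean_space \<Rightarrow> real"
  assumes "linear phi"
  shows "phi x = adjoint phi 1 \<bullet> x"
  using adjoint_works[OF assms, of x 1] by (simp add: inner_commute)

lemma faces_eq:
  fixes Q :: "'a::euclidean_space set"
  assumes "polytope Q" "Q \<noteq> {}"
  shows "faces Q = {F. F face_of Q \<and> F \<noteq> {}}"
proof
  show "faces Q \<subseteq> {F. F face_of Q \<and> F \<noteq> {}}"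
  proof
    fix F assume "F \<in> faces Q"
    then obtain psi :: "'a \<Rightarrow> real" where lp: "linear psi" and F: "F = {q \<in> Q. \<forall>q'\<in>Q. psi q' \<le> psi q}"
      unfolding faces_def by blast
    define b where "b = adjoint psi 1"
    have psi: "psi x = b \<bullet> x" for x using linear_real_inner[OF lp] b_def by simp
    show "F \<in> {F. F face_of Q \<and> F \<noteq> {}}"
    proof -
      have cb: "continuous_on Q (\<lambda>x. b \<bullet> x)" by (intro continuous_intros)
      obtain m where "m \<in> Q" and m: "\<And>y. y \<in> Q \<Longrightarrow> b \<bullet> y \<le> b \<bullet> m"
        using continuous_attains_sup[OF polytope_imp_compact[OF assms(1)] assms(2) cb] by blast
      have FF: "F = Q \<inter> {x. b \<bullet> x = b \<bullet> m}"
      proof (rule set_eqI)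
        fix x show "x \<in> F \<longleftrightarrow> x \<in> Q \<inter> {x. b \<bullet> x = b \<bullet> m}"
          unfolding F psi using m \<open>m \<in> Q\<close> by (auto simp: order.eq_iff) (meson m order_trans)
      qed
      have "F face_of Q" unfolding FF
        by (rule face_of_Int_supporting_hyperplane_le) (use m polytope_imp_convex[OF assms(1)] in auto)
      moreover have "m \<in> F" using FF \<open>m \<in> Q\<close> by auto
      ultimately show ?thesis by auto
    qed
  qed
  show "{F. F face_of Q \<and> F \<noteq> {}} \<subseteq> faces Q"
  proof
    fix F assume "F \<in> {F. F face_of Q \<and> F \<noteq> {}}"
    then have FQ: "F face_of Q" and ne: "F \<noteq> {}" by auto
    then have "F exposed_face_of Q"
      using exposed_face_of_polyhedron polytope_imp_polyhedron assms(1) by blast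
    then obtain b d where Qd: "Q \<subseteq> {x. b \<bullet> x \<le> d}" and Fe: "F = Q \<inter> {x. b \<bullet> x = d}"
      unfolding exposed_face_of_def by blast
    obtain f where "f \<in> F" using ne by auto
    have "F = {q \<in> Q. \<forall>q'\<in>Q. (\<lambda>x. b \<bullet> x) q' \<le> (\<lambda>x. b \<bullet> x) q}"
    proof (rule set_eqI)
      fix x show "x \<in> F \<longleftrightarrow> x \<in> {q \<in> Q. \<forall>q'\<in>Q. (\<lambda>x. b \<bullet> x) q' \<le> (\<lambda>x. b \<bullet> x) q}"
      proof
        assume "x \<in> F" then show "x \<in> {q \<in> Q. \<forall>q'\<in>Q. (\<lambda>x. b \<bullet> x) q' \<le> (\<lambda>x. b \<bullet> x) q}"
          using Qd unfolding Fe by auto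
      next
        assume x: "x \<in> {q \<in> Q. \<forall>q'\<in>Q. (\<lambda>x. b \<bullet> x) q' \<le> (\<lambda>x. b \<bullet> x) q}"
        have "f \<in> Q" "b \<bullet> f = d" using \<open>f \<in> F\<close> Fe by auto
        then have "b \<bullet> x \<ge> d" using x by auto
        moreover have "b \<bullet> x \<le> d" using x Qd by auto
        ultimately show "x \<in> F" using x Fe by auto
      qed
    qed
    moreover have "linear (\<lambda>x. b \<bullet> x)" using bounded_linear_inner_right[of b] by (rule bounded_linear.linear)
    ultimately show "F \<in> faces Q" unfolding faces_def by blast
  qed
qed

lemma ri_face:
  fixes P :: "'a::euclidean_space set"
  assumes "polytope P" "x \<in> P"
  shows "\<exists>F. F face_of P \<and> x \<in> rel_interior F"
proof -
  define F where "F = \<Inter>{T. T face_of P \<and> x \<in> T}"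
  have cP: "convex P" using assms polytope_imp_convex by blast
  have Pin: "P \<in> {T. T face_of P \<and> x \<in> T}" using face_of_refl[OF cP] assms(2) by simp
  have FP: "F face_of P" unfolding F_def
    by (rule face_of_Inter) (use Pin in blast, simp)
  have xF: "x \<in> F" unfolding F_def by simp
  have "x \<in> rel_interior F"
  proof (rule ccontr)
    assume "x \<notin> rel_interior F"
    have "polytope F" using face_of_polytope_polytope[OF assms(1) FP] .
    then have "closed F" using polytope_imp_closed by blast
    then have "x \<in> rel_frontier F" using xF \<open>x \<notin> rel_interior F\<close> by (simp add: rel_frontier_def)
    then obtain T where T: "T face_of F" "T \<noteq> F" "x \<in> T"
      using rel_frontier_of_polyhedron_alt[OF polytope_imp_polyhedron[OF \<open>polytope F\<close>]] by blast
    have "T face_of P" using face_of_trans[OF T(1) FP] .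
    have "F \<subseteq> T" unfolding F_def by (rule Inter_lower) (simp add: T(3) \<open>T face_of P\<close>)
    then show False using T face_of_imp_subset by blast
  qed
  then show ?thesis using FP by blast
qed

lemma pclass_plus:
  fixes A B :: "'a::euclidean_space set"
  assumes "polytope A" "A \<noteq> {}" "polytope B" "B \<noteq> {}"
  shows "pclass (A + B) = pclass A + pclass B"
proof -
  have AB: "polytope (A + B)" "A + B \<noteq> {}"
    using polytope_set_plus[OF assms(1,3)] assms(2,4) by (auto simp: set_plus_def)
  have pA: "pset (Abs_ppoly A) = A" using assms(1,2) by (simp add: Abs_ppoly_inverse)
  have pB: "pset (Abs_ppoly B) = B" using assms(3,4) by (simp add: Abs_ppoly_inverse)
  have pAB: "pset (Abs_ppoly (A + B)) = A + B" using AB by (simp add: Abs_ppoly_inverse)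
  have "abs_grot (Abs_ppoly A, ppzero) + abs_grot (Abs_ppoly B, ppzero)
      = abs_grot (ppadd (Abs_ppoly A) (Abs_ppoly B), ppadd ppzero ppzero)"
    by (simp add: plus_grot.abs_eq grot.abs_eq_iff equivp_reflp[OF grot_rel_equivp])
  also have "\<dots> = abs_grot (Abs_ppoly (A + B), ppzero)"
    unfolding grot.abs_eq_iff grot_rel_def
    by (rule exI[of _ ppzero]) (simp add: pset_ppadd pset_ppzero pA pB pAB ac_simps)
  finally show ?thesis using AB assms by (simp add: pclass_def)
qed

lemma mink_split:
  fixes F :: "'a::euclidean_space set"
  assumes "convex F"
  shows "(F \<inter> {x. a \<bullet> x \<ge> c}) + (F \<inter> {x. a \<bullet> x \<le> c}) = F + (F \<inter> {x. a \<bullet> x = c})"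
proof
  show "(F \<inter> {x. a \<bullet> x \<ge> c}) + (F \<inter> {x. a \<bullet> x \<le> c}) \<subseteq> F + (F \<inter> {x. a \<bullet> x = c})"
  proof
    fix s assume "s \<in> (F \<inter> {x. a \<bullet> x \<ge> c}) + (F \<inter> {x. a \<bullet> x \<le> c})"
    then obtain x y where x: "x \<in> F" "a \<bullet> x \<ge> c" and y: "y \<in> F" "a \<bullet> y \<le> c" and s: "s = x + y"
      by (auto simp: set_plus_def)
    obtain w where w: "w \<in> closed_segment x y" "a \<bullet> w = c"
      using cross_point_closed[OF x(2) y(2)] by blast
    then obtain t where t: "0 \<le> t" "t \<le> 1" "w = (1 - t) *\<^sub>R x + t *\<^sub>R y" by (auto simp: in_segment)
    have wF: "w \<in> F" using w(1) x(1) y(1) assms convex_contains_segment by blast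
    define u where "u = t *\<^sub>R x + (1 - t) *\<^sub>R y"
    have uF: "u \<in> F" unfolding u_def using assms x(1) y(1) t(1,2) by (simp add: convex_def)
    have "s = u + w" unfolding s u_def t(3) by (simp add: algebra_simps)
    then show "s \<in> F + (F \<inter> {x. a \<bullet> x = c})" using uF wF w(2) by (auto simp: set_plus_def)
  qed
  show "F + (F \<inter> {x. a \<bullet> x = c}) \<subseteq> (F \<inter> {x. a \<bullet> x \<ge> c}) + (F \<inter> {x. a \<bullet> x \<le> c})"
  proof
    fix s assume "s \<in> F + (F \<inter> {x. a \<bullet> x = c})"
    then obtain x y where x: "x \<in> F" and y: "y \<in> F" "a \<bullet> y = c" and s: "s = x + y"
      by (auto simp: set_plus_def)
    show "s \<in> (F \<inter> {x. a \<bullet> x \<ge> c}) + (F \<inter> {x. a \<bullet> x \<le> c})"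
    proof (cases "a \<bullet> x \<ge> c")
      case True then show ?thesis using x y s by (auto simp: set_plus_def)
    next
      case False
      have "s = y + x" using s by (simp add: add.commute)
      moreover have "y \<in> F \<inter> {x. a \<bullet> x \<ge> c}" "x \<in> F \<inter> {x. a \<bullet> x \<le> c}" using x y False by auto
      ultimately show ?thesis by (auto simp: set_plus_def)
    qed
  qed
qed

lemma dim_half:
  fixes F :: "'a::euclidean_space set"
  assumes "convex F" "y \<in> F" "a \<bullet> y > c"
  shows "aff_dim (F \<inter> {x. a \<bullet> x \<ge> c}) = aff_dim F"
proof -
  have "aff_dim (F \<inter> {x. a \<bullet> x > c}) = aff_dim F"
    by (rule aff_dim_convex_Int_open) (use assms open_halfspace_gt in auto)
  moreover have "aff_dim (F \<inter> {x. a \<bullet> x > c}) \<le> aff_dim (F \<inter> {x. a \<bullet> x \<ge> c})"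
    by (rule aff_dim_subset) auto
  moreover have "aff_dim (F \<inter> {x. a \<bullet> x \<ge> c}) \<le> aff_dim F"
    by (rule aff_dim_subset) auto
  ultimately show ?thesis by linarith
qed

lemma dim_cut:
  fixes F :: "'a::euclidean_space set"
  assumes "convex F" "y \<in> F" "a \<bullet> y > c" "z \<in> F" "a \<bullet> z < c"
  shows "aff_dim (F \<inter> {x. a \<bullet> x = c}) = aff_dim F - 1"
proof -
  obtain r where r: "r \<in> rel_interior F"
    using rel_interior_eq_empty[OF assms(1)] assms(2) by blast
  have "\<exists>p \<in> rel_interior F. a \<bullet> p = c"
  proof (cases "a \<bullet> r = c")
    case True then show ?thesis using r by blast
  next
    case False
    show ?thesis
    proof (cases "a \<bullet> r > c")
      case True
      obtain w where "w \<in> open_segment r z" "a \<bullet> w = c" using cross_point[OF True assms(5)] by blast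
      moreover have "open_segment r z \<subseteq> rel_interior F"
        using rel_interior_closure_convex_segment[OF assms(1) r] assms(4) closure_subset by blast
      ultimately show ?thesis by blast
    next
      case False
      then have "a \<bullet> r < c" using \<open>a \<bullet> r \<noteq> c\<close> by linarith
      then obtain w where "w \<in> open_segment r y" "a \<bullet> w = c" using cross_point'[OF _ assms(3)] by blast
      moreover have "open_segment r y \<subseteq> rel_interior F"
        using rel_interior_closure_convex_segment[OF assms(1) r] assms(2) closure_subset by blast
      ultimately show ?thesis by blast
    qed
  qed
  then obtain p where p: "p \<in> rel_interior F" "a \<bullet> p = c" by blast
  obtain U where U: "open U" "rel_interior F = U \<inter> affine hull F"
    using openin_rel_interior[of F] by (auto simp: openin_open)
  define A where "A = affine hull F \<inter> {x. a \<bullet> x = c}"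
  have pF: "p \<in> F" using p rel_interior_subset by blast
  have affA: "affine A" unfolding A_def by (intro affine_Int affine_affine_hull affine_hyperplane)
  have "aff_dim A = aff_dim F - 1"
  proof -
    have "affine hull F \<inter> {v. a \<bullet> v = c} \<noteq> {}" using pF p(2) hull_subset by fastforce
    moreover have "\<not> affine hull F \<subseteq> {v. a \<bullet> v = c}" using assms(2,3) hull_subset by fastforce
    ultimately show ?thesis unfolding A_def
      by (simp add: aff_dim_affine_Int_hyperplane[OF affine_affine_hull])
  qed
  moreover have "aff_dim (A \<inter> U) = aff_dim A"
    by (rule aff_dim_convex_Int_open) (use affA affine_imp_convex U p pF hull_subset in \<open>auto simp: A_def\<close>)
  moreover have "aff_dim (A \<inter> U) \<le> aff_dim (F \<inter> {x. a \<bullet> x = c})"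
    by (rule aff_dim_subset) (use U rel_interior_subset in \<open>auto simp: A_def\<close>)
  moreover have "aff_dim (F \<inter> {x. a \<bullet> x = c}) \<le> aff_dim A"
    by (rule aff_dim_subset) (use hull_subset[of F affine] in \<open>auto simp: A_def\<close>)
  ultimately show ?thesis by linarith
qed

lemma pull:
  assumes "T face_of S" "u \<in> S" "v \<in> S" "w \<in> open_segment u v" "w \<in> T"
  shows "u \<in> T"
  using face_ofD[OF assms(1,4,2,3,5)] by blast

lemma cut_class:
  fixes P :: "'a::euclidean_space set"
  assumes "F face_of P" "x \<in> F" "a \<bullet> x = c"
  shows "(F \<inter> {x. a \<bullet> x = c}) face_of P \<and> F \<inter> {x. a \<bullet> x = c} \<noteq> {}
         \<or> (\<not> F \<subseteq> {x. a \<bullet> x \<ge> c} \<and> \<not> F \<subseteq> {x. a \<bullet> x \<le> c})"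
proof -
  have cF: "convex F" using face_of_imp_convex assms(1) by blast
  have ne: "F \<inter> {x. a \<bullet> x = c} \<noteq> {}" using assms by auto
  consider "F \<subseteq> {x. a \<bullet> x \<ge> c}" | "F \<subseteq> {x. a \<bullet> x \<le> c}"
    | "\<not> F \<subseteq> {x. a \<bullet> x \<ge> c} \<and> \<not> F \<subseteq> {x. a \<bullet> x \<le> c}" by blast
  then show ?thesis
  proof cases
    case 1
    then have "(F \<inter> {x. a \<bullet> x = c}) face_of F"
      by (intro face_of_Int_supporting_hyperplane_ge cF) auto
    then show ?thesis using face_of_trans assms(1) ne by blast
  next
    case 2
    then have "(F \<inter> {x. a \<bullet> x = c}) face_of F"
      by (intro face_of_Int_supporting_hyperplane_le cF) auto
    then show ?thesis using face_of_trans assms(1) ne by blast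
  qed blast
qed

lemma interior_halfspace_pt:
  fixes a x :: "'a::euclidean_space"
  assumes "a \<bullet> x > c"
  shows "x \<in> rel_interior {x. a \<bullet> x \<ge> c}"
proof -
  have "x \<in> interior {x. a \<bullet> x \<ge> c}"
    by (rule interiorI[of "{x. a \<bullet> x > c}"]) (use assms open_halfspace_gt in auto)
  then show ?thesis using interior_subset_rel_interior by blast
qed

lemma cross_nonempty:
  fixes F :: "'a::euclidean_space set"
  assumes "convex F" "\<not> F \<subseteq> {x. a \<bullet> x \<ge> c}" "\<not> F \<subseteq> {x. a \<bullet> x \<le> c}"
  shows "F \<inter> {x. a \<bullet> x = c} \<noteq> {}"
proof -
  obtain y where y: "y \<in> F" "a \<bullet> y < c" using assms(2) by (auto simp: subset_iff not_le)
  obtain z where z: "z \<in> F" "a \<bullet> z > c" using assms(3) by (auto simp: subset_iff not_le)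
  obtain w where w: "w \<in> open_segment z y" "a \<bullet> w = c" using cross_point[OF z(2) y(2)] by blast
  have "w \<in> F" using assms(1) y(1) z(1) w(1)
    by (meson convex_contains_segment segment_open_subset_closed subsetD)
  then show ?thesis using w(2) by blast
qed

lemma faces_half:
  fixes P :: "'a::euclidean_space set"
  assumes "polytope P"
  shows "{G. G face_of (P \<inter> {x. a \<bullet> x \<ge> c}) \<and> G \<noteq> {}}
       = {F. F face_of P \<and> F \<noteq> {} \<and> F \<subseteq> {x. a \<bullet> x = c}}
       \<union> {F. F face_of P \<and> F \<noteq> {} \<and> F \<subseteq> {x. a \<bullet> x \<ge> c} \<and> \<not> F \<subseteq> {x. a \<bullet> x = c}}
       \<union> (\<lambda>F. F \<inter> {x. a \<bullet> x \<ge> c}) ` {F. F face_of P \<and> F \<noteq> {} \<and> \<not> F \<subseteq> {x. a \<bullet> x \<ge> c} \<and> \<not> F \<subseteq> {x. a \<bullet> x \<le> c}}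
       \<union> (\<lambda>F. F \<inter> {x. a \<bullet> x = c}) ` {F. F face_of P \<and> F \<noteq> {} \<and> \<not> F \<subseteq> {x. a \<bullet> x \<ge> c} \<and> \<not> F \<subseteq> {x. a \<bullet> x \<le> c}}"
  (is "?L = ?Z \<union> ?Pp \<union> ?A \<union> ?B")
proof
  define Hp where "Hp = {x. a \<bullet> x \<ge> c}"
  define H0 where "H0 = {x. a \<bullet> x = c}"
  have cP: "convex P" using assms polytope_imp_convex by blast
  have cHp: "convex Hp" unfolding Hp_def by (rule convex_halfspace_ge)
  have H0f: "(Hp \<inter> H0) face_of Hp" unfolding Hp_def H0_def
    by (intro face_of_Int_supporting_hyperplane_ge convex_halfspace_ge) auto
  have HpH0: "Hp \<inter> H0 = H0" by (auto simp: Hp_def H0_def)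
  show "?Z \<union> ?Pp \<union> ?A \<union> ?B \<subseteq> ?L"
  proof (intro Un_least)
    show "?Z \<subseteq> ?L"
    proof
      fix G assume "G \<in> ?Z"
      then have G: "G face_of P" "G \<noteq> {}" "G \<subseteq> {x. a \<bullet> x = c}" by auto
      have "G face_of (P \<inter> {x. a \<bullet> x \<ge> c})"
        by (rule face_of_subset[OF G(1)]) (use G(3) face_of_imp_subset[OF G(1)] in auto)
      then show "G \<in> ?L" using G(2) by blast
    qed
    show "?Pp \<subseteq> ?L"
    proof
      fix G assume "G \<in> ?Pp"
      then have G: "G face_of P" "G \<noteq> {}" "G \<subseteq> {x. a \<bullet> x \<ge> c}" by auto
      have "G face_of (P \<inter> {x. a \<bullet> x \<ge> c})"
        by (rule face_of_subset[OF G(1)]) (use G(3) face_of_imp_subset[OF G(1)] in auto)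
      then show "G \<in> ?L" using G(2) by blast
    qed
    show "?A \<subseteq> ?L"
    proof
      fix G assume "G \<in> ?A"
      then obtain F where F: "F face_of P" "\<not> F \<subseteq> {x. a \<bullet> x \<le> c}" and G: "G = F \<inter> Hp"
        by (auto simp: Hp_def)
      have "G face_of (P \<inter> Hp)" unfolding G by (rule face_of_Int_Int[OF F(1) face_of_refl[OF cHp]])
      moreover have "G \<noteq> {}" using F(2) G by (auto simp: Hp_def)
      ultimately show "G \<in> ?L" by (simp add: Hp_def)
    qed
    show "?B \<subseteq> ?L"
    proof
      fix G assume "G \<in> ?B"
      then obtain F where F: "F face_of P" "\<not> F \<subseteq> {x. a \<bullet> x \<ge> c}" "\<not> F \<subseteq> {x. a \<bullet> x \<le> c}" and G: "G = F \<inter> H0"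
        by (auto simp: H0_def)
      have "(F \<inter> (Hp \<inter> H0)) face_of (P \<inter> Hp)" by (rule face_of_Int_Int[OF F(1) H0f])
      then have "G face_of (P \<inter> Hp)" using HpH0 G by simp
      moreover have "G \<noteq> {}"
        unfolding G H0_def by (rule cross_nonempty[OF face_of_imp_convex[OF F(1)] F(2,3)])
      ultimately show "G \<in> ?L" by (simp add: Hp_def)
    qed
  qed
  show "?L \<subseteq> ?Z \<union> ?Pp \<union> ?A \<union> ?B"
  proof
    fix G assume "G \<in> ?L"
    then have GP1: "G face_of (P \<inter> Hp)" and Gne: "G \<noteq> {}" by (auto simp: Hp_def)
    have cG: "convex G" using face_of_imp_convex GP1 by blast
    obtain x where xG: "x \<in> rel_interior G" using rel_interior_eq_empty[OF cG] Gne by blast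
    have GsP: "G \<subseteq> P \<inter> Hp" using face_of_imp_subset GP1 by blast
    have xP: "x \<in> P" "x \<in> Hp" using xG rel_interior_subset GsP by blast+
    obtain F where FP: "F face_of P" and xF: "x \<in> rel_interior F" using ri_face[OF assms xP(1)] by blast
    have cF: "convex F" using face_of_imp_convex FP by blast
    have xF': "x \<in> F" using xF rel_interior_subset by blast
    have GF: "G \<subseteq> F" by (rule subset_of_face_of[OF FP]) (use GsP xG xF' in auto)
    have Fne: "F \<noteq> {}" using xF' by blast
    show "G \<in> ?Z \<union> ?Pp \<union> ?A \<union> ?B"
    proof (cases "a \<bullet> x > c")
      case True
      have "x \<in> rel_interior (F \<inter> Hp)"
        using convex_rel_interior_inter_two[OF cF cHp] interior_halfspace_pt[OF True] xF
        unfolding Hp_def by blast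
      then have "F \<inter> Hp \<subseteq> G"
        by (intro subset_of_face_of[OF GP1]) (use face_of_imp_subset[OF FP] xG rel_interior_subset in auto)
      then have GFe: "G = F \<inter> Hp" using GF GsP by blast
      show ?thesis
      proof (cases "F \<subseteq> Hp")
        case True
        then have "G = F" using GFe by blast
        moreover have "\<not> F \<subseteq> {x. a \<bullet> x = c}" using xF' \<open>a \<bullet> x > c\<close> by auto
        ultimately have "G \<in> ?Pp" using FP Fne True unfolding Hp_def by simp
        then show ?thesis by (intro UnI1 UnI2)
      next
        case False
        have "\<not> F \<subseteq> {x. a \<bullet> x \<le> c}" using xF' \<open>a \<bullet> x > c\<close> by auto
        then have "F \<in> {F. F face_of P \<and> F \<noteq> {} \<and> \<not> F \<subseteq> {x. a \<bullet> x \<ge> c} \<and> \<not> F \<subseteq> {x. a \<bullet> x \<le> c}}"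
          using FP Fne False unfolding Hp_def by blast
        then have "G \<in> ?A" using GFe unfolding Hp_def by (rule image_eqI[rotated])
        then show ?thesis by (intro UnI1 UnI2)
      qed
    next
      case False
      then have xc: "a \<bullet> x = c" using xP(2) by (simp add: Hp_def)
      have "x \<in> rel_interior (F \<inter> H0)"
        using convex_affine_rel_interior_Int[OF cF affine_hyperplane[of a c]] xF xc
        unfolding H0_def by blast
      then have "F \<inter> H0 \<subseteq> G"
        by (intro subset_of_face_of[OF GP1]) (use face_of_imp_subset[OF FP] xG rel_interior_subset in \<open>auto simp: Hp_def H0_def\<close>)
      moreover have "G \<subseteq> H0"
      proof -
        have T0: "((P \<inter> Hp) \<inter> {x. a \<bullet> x = c}) face_of (P \<inter> Hp)"
          by (intro face_of_Int_supporting_hyperplane_ge convex_Int cP cHp) (auto simp: Hp_def)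
        have "G \<subseteq> (P \<inter> Hp) \<inter> {x. a \<bullet> x = c}"
          by (rule subset_of_face_of[OF T0 face_of_imp_subset[OF GP1]]) (use xG xP xc in auto)
        then show ?thesis by (auto simp: H0_def)
      qed
      ultimately have GFe: "G = F \<inter> H0" using GF by blast
      from cut_class[OF FP xF' xc]
      show ?thesis
      proof
        assume "(F \<inter> {x. a \<bullet> x = c}) face_of P \<and> F \<inter> {x. a \<bullet> x = c} \<noteq> {}"
        then have "G \<in> ?Z" using GFe unfolding H0_def by simp
        then show ?thesis by (intro UnI1)
      next
        assume "\<not> F \<subseteq> {x. a \<bullet> x \<ge> c} \<and> \<not> F \<subseteq> {x. a \<bullet> x \<le> c}"
        then have "F \<in> {F. F face_of P \<and> F \<noteq> {} \<and> \<not> F \<subseteq> {x. a \<bullet> x \<ge> c} \<and> \<not> F \<subseteq> {x. a \<bullet> x \<le> c}}"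
          using FP Fne by simp
        then have "G \<in> ?B" using GFe unfolding H0_def by (rule image_eqI[rotated])
        then show ?thesis by (intro UnI2)
      qed
    qed
  qed
qed

lemma faces_cut:
  fixes P :: "'a::euclidean_space set"
  assumes "polytope P"
  shows "{G. G face_of (P \<inter> {x. a \<bullet> x = c}) \<and> G \<noteq> {}}
       = {F. F face_of P \<and> F \<noteq> {} \<and> F \<subseteq> {x. a \<bullet> x = c}}
       \<union> (\<lambda>F. F \<inter> {x. a \<bullet> x = c}) ` {F. F face_of P \<and> F \<noteq> {} \<and> \<not> F \<subseteq> {x. a \<bullet> x \<ge> c} \<and> \<not> F \<subseteq> {x. a \<bullet> x \<le> c}}"
  (is "?L = ?Z \<union> ?B")
proof
  define H0 where "H0 = {x. a \<bullet> x = c}"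
  have cP: "convex P" using assms polytope_imp_convex by blast
  have cH0: "convex H0" unfolding H0_def by (rule convex_hyperplane)
  show "?Z \<union> ?B \<subseteq> ?L"
  proof (intro Un_least)
    show "?Z \<subseteq> ?L"
    proof
      fix G assume "G \<in> ?Z"
      then have G: "G face_of P" "G \<noteq> {}" "G \<subseteq> {x. a \<bullet> x = c}" by auto
      have "G face_of (P \<inter> {x. a \<bullet> x = c})"
        by (rule face_of_subset[OF G(1)]) (use G(3) face_of_imp_subset[OF G(1)] in auto)
      then show "G \<in> ?L" using G(2) by blast
    qed
    show "?B \<subseteq> ?L"
    proof
      fix G assume "G \<in> ?B"
      then obtain F where F: "F face_of P" "\<not> F \<subseteq> {x. a \<bullet> x \<ge> c}" "\<not> F \<subseteq> {x. a \<bullet> x \<le> c}" and G: "G = F \<inter> H0"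
        by (auto simp: H0_def)
      have "G face_of (P \<inter> H0)" unfolding G by (rule face_of_Int_Int[OF F(1) face_of_refl[OF cH0]])
      moreover have "G \<noteq> {}"
        unfolding G H0_def by (rule cross_nonempty[OF face_of_imp_convex[OF F(1)] F(2,3)])
      ultimately show "G \<in> ?L" by (simp add: H0_def)
    qed
  qed
  show "?L \<subseteq> ?Z \<union> ?B"
  proof
    fix G assume "G \<in> ?L"
    then have GP1: "G face_of (P \<inter> H0)" and Gne: "G \<noteq> {}" by (auto simp: H0_def)
    have cG: "convex G" using face_of_imp_convex GP1 by blast
    obtain x where xG: "x \<in> rel_interior G" using rel_interior_eq_empty[OF cG] Gne by blast
    have GsP: "G \<subseteq> P \<inter> H0" using face_of_imp_subset GP1 by blast
    have xP: "x \<in> P" "x \<in> H0" using xG rel_interior_subset GsP by blast+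
    obtain F where FP: "F face_of P" and xF: "x \<in> rel_interior F" using ri_face[OF assms xP(1)] by blast
    have cF: "convex F" using face_of_imp_convex FP by blast
    have xF': "x \<in> F" using xF rel_interior_subset by blast
    have GF: "G \<subseteq> F" by (rule subset_of_face_of[OF FP]) (use GsP xG xF' in auto)
    have Fne: "F \<noteq> {}" using xF' by blast
    have xc: "a \<bullet> x = c" using xP(2) by (simp add: H0_def)
    have "x \<in> rel_interior (F \<inter> H0)"
      using convex_affine_rel_interior_Int[OF cF affine_hyperplane[of a c]] xF xc
      unfolding H0_def by blast
    then have "F \<inter> H0 \<subseteq> G"
      by (intro subset_of_face_of[OF GP1]) (use face_of_imp_subset[OF FP] xG rel_interior_subset in \<open>auto simp: H0_def\<close>)
    then have GFe: "G = F \<inter> H0" using GF GsP by blast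
    from cut_class[OF FP xF' xc]
    show "G \<in> ?Z \<union> ?B"
    proof
      assume "(F \<inter> {x. a \<bullet> x = c}) face_of P \<and> F \<inter> {x. a \<bullet> x = c} \<noteq> {}"
      then have "G \<in> ?Z" using GFe unfolding H0_def by simp
      then show ?thesis by (intro UnI1)
    next
      assume "\<not> F \<subseteq> {x. a \<bullet> x \<ge> c} \<and> \<not> F \<subseteq> {x. a \<bullet> x \<le> c}"
      then have "F \<in> {F. F face_of P \<and> F \<noteq> {} \<and> \<not> F \<subseteq> {x. a \<bullet> x \<ge> c} \<and> \<not> F \<subseteq> {x. a \<bullet> x \<le> c}}"
        using FP Fne by simp
      then have "G \<in> ?B" using GFe unfolding H0_def by (rule image_eqI[rotated])
      then show ?thesis by (intro UnI2)
    qed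
  qed
qed

lemma seg_in:
  assumes "convex F" "y \<in> F" "z \<in> F" "w \<in> open_segment y z"
  shows "w \<in> F"
  using assms by (meson convex_contains_segment segment_open_subset_closed subsetD)

lemma inj_half:
  fixes P :: "'a::euclidean_space set"
  assumes "F face_of P" "F' face_of P" "y \<in> F" "a \<bullet> y > c"
    and eq: "F \<inter> {x. a \<bullet> x \<ge> c} = F' \<inter> {x. a \<bullet> x \<ge> c}"
  shows "F \<subseteq> F'"
proof
  fix u assume uF: "u \<in> F"
  show "u \<in> F'"
  proof (cases "a \<bullet> u \<ge> c")
    case True then show ?thesis using uF eq by blast
  next
    case False
    then obtain w where w: "w \<in> open_segment y u" "a \<bullet> w = c"
      using cross_point[OF assms(4), of u] by auto
    have "w \<in> F" using seg_in[OF face_of_imp_convex[OF assms(1)] assms(3) uF w(1)] .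
    then have "w \<in> F'" using eq w(2) by blast
    have "y \<in> P" "u \<in> P" using assms(3) uF face_of_imp_subset[OF assms(1)] by auto
    then show ?thesis using face_ofD[OF assms(2) w(1)] \<open>w \<in> F'\<close> by blast
  qed
qed

lemma inj_cut:
  fixes P :: "'a::euclidean_space set"
  assumes "F face_of P" "F' face_of P" "y \<in> F" "a \<bullet> y > c" "z \<in> F" "a \<bullet> z < c"
    and eq: "F \<inter> {x. a \<bullet> x = c} = F' \<inter> {x. a \<bullet> x = c}"
  shows "F \<subseteq> F'"
proof
  fix u assume uF: "u \<in> F"
  have cF: "convex F" using face_of_imp_convex[OF assms(1)] .
  have sP: "F \<subseteq> P" using face_of_imp_subset[OF assms(1)] .
  consider "a \<bullet> u = c" | "a \<bullet> u > c" | "a \<bullet> u < c" by linarith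
  then show "u \<in> F'"
  proof cases
    case 1 then show ?thesis using uF eq by blast
  next
    case 2
    then obtain w where w: "w \<in> open_segment u z" "a \<bullet> w = c"
      using cross_point[OF 2 assms(6)] by auto
    have "w \<in> F'" using seg_in[OF cF uF assms(5) w(1)] eq w(2) by blast
    then show ?thesis using face_ofD[OF assms(2) w(1)] uF assms(5) sP by blast
  next
    case 3
    then obtain w where w: "w \<in> open_segment u y" "a \<bullet> w = c"
      using cross_point'[OF 3 assms(4)] by auto
    have "w \<in> F'" using seg_in[OF cF uF assms(3) w(1)] eq w(2) by blast
    then show ?thesis using face_ofD[OF assms(2) w(1)] uF assms(3) sP by blast
  qed
qed

lemma notface_gen:
  fixes P :: "'a::euclidean_space set"
  assumes "convex F" "F \<subseteq> P" "y \<in> F" "a \<bullet> y > c" "z \<in> F" "a \<bullet> z < c"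
    and K: "{x. a \<bullet> x = c} \<subseteq> K" "\<not> (y \<in> K \<and> z \<in> K)"
  shows "\<not> (F \<inter> K) face_of P"
proof
  assume fK: "(F \<inter> K) face_of P"
  obtain w where w: "w \<in> open_segment y z" "a \<bullet> w = c" using cross_point[OF assms(4,6)] by blast
  have "w \<in> F \<inter> K" using seg_in[OF assms(1,3,5) w(1)] w(2) K(1) by blast
  then show False using face_ofD[OF fK w(1)] assms(2,3,5) K(2) by blast
qed

lemma uminus_set_plus:
  fixes A B :: "'a::ab_group_add set"
  shows "uminus ` (A + B) = uminus ` A + uminus ` B"
proof
  show "uminus ` (A + B) \<subseteq> uminus ` A + uminus ` B"
  proof
    fix s assume "s \<in> uminus ` (A + B)"
    then obtain x y where "x \<in> A" "y \<in> B" "s = - (x + y)" by (auto simp: set_plus_def)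
    then have "s = (- x) + (- y)" "- x \<in> uminus ` A" "- y \<in> uminus ` B" by (auto simp: add.commute)
    then show "s \<in> uminus ` A + uminus ` B" by (simp only: set_plus_intro)
  qed
  show "uminus ` A + uminus ` B \<subseteq> uminus ` (A + B)"
  proof
    fix s assume "s \<in> uminus ` A + uminus ` B"
    then obtain x y where "x \<in> A" "y \<in> B" "s = (- x) + (- y)" by (auto simp: set_plus_def)
    then have "s = - (x + y)" "x + y \<in> A + B" by (auto simp: add.commute intro: set_plus_intro)
    then show "s \<in> uminus ` (A + B)" by blast
  qed
qed

lemma faces_half_m:
  fixes P :: "'a::euclidean_space set"
  assumes "polytope P"
  shows "{G. G face_of (P \<inter> {x. a \<bullet> x \<le> c}) \<and> G \<noteq> {}}
       = {F. F face_of P \<and> F \<noteq> {} \<and> F \<subseteq> {x. a \<bullet> x = c}}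
       \<union> {F. F face_of P \<and> F \<noteq> {} \<and> F \<subseteq> {x. a \<bullet> x \<le> c} \<and> \<not> F \<subseteq> {x. a \<bullet> x = c}}
       \<union> (\<lambda>F. F \<inter> {x. a \<bullet> x \<le> c}) ` {F. F face_of P \<and> F \<noteq> {} \<and> \<not> F \<subseteq> {x. a \<bullet> x \<ge> c} \<and> \<not> F \<subseteq> {x. a \<bullet> x \<le> c}}
       \<union> (\<lambda>F. F \<inter> {x. a \<bullet> x = c}) ` {F. F face_of P \<and> F \<noteq> {} \<and> \<not> F \<subseteq> {x. a \<bullet> x \<ge> c} \<and> \<not> F \<subseteq> {x. a \<bullet> x \<le> c}}"
proof -
  have h1: "{x. -c \<le> (-a) \<bullet> x} = {x. a \<bullet> x \<le> c}" by auto
  have h2: "{x. (-a) \<bullet> x = -c} = {x. a \<bullet> x = c}" by auto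
  have h3: "{x. (-a) \<bullet> x \<le> -c} = {x. a \<bullet> x \<ge> c}" by auto
  have hX: "{F. F face_of P \<and> F \<noteq> {} \<and> \<not> F \<subseteq> {x. a \<bullet> x \<le> c} \<and> \<not> F \<subseteq> {x. a \<bullet> x \<ge> c}}
      = {F. F face_of P \<and> F \<noteq> {} \<and> \<not> F \<subseteq> {x. a \<bullet> x \<ge> c} \<and> \<not> F \<subseteq> {x. a \<bullet> x \<le> c}}" by blast
  show ?thesis using faces_half[OF assms, where a="-a" and c="-c"] unfolding h1 h2 h3 hX .
qed

lemma main_gen:
  fixes P :: "'a::euclidean_space set" and a :: 'a and c :: real
  assumes P: "polytope P" and ne1: "P \<inter> {x. a \<bullet> x \<ge> c} \<noteq> {}" and ne2: "P \<inter> {x. a \<bullet> x \<le> c} \<noteq> {}"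
  shows "chiF P + chiF (P \<inter> {x. a \<bullet> x = c})
           = chiF (P \<inter> {x. a \<bullet> x \<ge> c}) + chiF (P \<inter> {x. a \<bullet> x \<le> c})"
proof -
  define Hp where "Hp = {x. a \<bullet> x \<ge> c}"
  define Hm where "Hm = {x. a \<bullet> x \<le> c}"
  define H0 where "H0 = {x. a \<bullet> x = c}"
  define w :: "'a set \<Rightarrow> 'a grot" where "w F = (if even (aff_dim F) then pclass F else - pclass F)" for F
  define Z where "Z = {F. F face_of P \<and> F \<noteq> {} \<and> F \<subseteq> H0}"
  define Pp where "Pp = {F. F face_of P \<and> F \<noteq> {} \<and> F \<subseteq> Hp \<and> \<not> F \<subseteq> H0}"
  define Pm where "Pm = {F. F face_of P \<and> F \<noteq> {} \<and> F \<subseteq> Hm \<and> \<not> F \<subseteq> H0}"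
  define X where "X = {F. F face_of P \<and> F \<noteq> {} \<and> \<not> F \<subseteq> Hp \<and> \<not> F \<subseteq> Hm}"
  have cP: "convex P" using P polytope_imp_convex by blast
  have finF: "finite {F. F face_of P}" using finite_polytope_faces[OF P] .
  have finZ: "finite Z" "finite Pp" "finite Pm" "finite X"
    unfolding Z_def Pp_def Pm_def X_def by (auto intro: finite_subset[OF _ finF])
  have Pne: "P \<noteq> {}" using ne1 by blast
  have ne0: "P \<inter> H0 \<noteq> {}"
  proof -
    obtain u v where "u \<in> P" "a \<bullet> u \<ge> c" "v \<in> P" "a \<bullet> v \<le> c" using ne1 ne2 by auto
    then obtain q where "q \<in> closed_segment u v" "a \<bullet> q = c" using cross_point_closed by blast
    then show ?thesis using \<open>u \<in> P\<close> \<open>v \<in> P\<close> cP convex_contains_segment unfolding H0_def by blast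
  qed
  have polyP1: "polytope (P \<inter> Hp)" "polytope (P \<inter> Hm)" "polytope (P \<inter> H0)"
    unfolding Hp_def Hm_def H0_def
    by (auto intro!: polytope_Int_polyhedron P polyhedron_halfspace_ge polyhedron_halfspace_le polyhedron_hyperplane)
  have chi: "chiF Q = sum w {F. F face_of Q \<and> F \<noteq> {}}" if "polytope Q" "Q \<noteq> {}" for Q
    using that unfolding chiF_def w_def by (simp add: faces_eq)
  have Xpts: "\<exists>y z. y \<in> F \<and> a \<bullet> y > c \<and> z \<in> F \<and> a \<bullet> z < c" if "F \<in> X" for F
    using that unfolding X_def Hp_def Hm_def subset_iff by (auto simp: not_le)
  have XP: "F face_of P" if "F \<in> X" for F using that by (simp add: X_def)
  have eqP: "{F. F face_of P \<and> F \<noteq> {}} = Z \<union> Pp \<union> Pm \<union> X"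
    unfolding Z_def Pp_def Pm_def X_def by blast
  have eq1: "{F. F face_of (P \<inter> Hp) \<and> F \<noteq> {}} = Z \<union> Pp \<union> (\<lambda>F. F \<inter> Hp) ` X \<union> (\<lambda>F. F \<inter> H0) ` X"
    unfolding Z_def Pp_def X_def Hp_def Hm_def H0_def by (rule faces_half[OF P])
  have eq2: "{F. F face_of (P \<inter> Hm) \<and> F \<noteq> {}} = Z \<union> Pm \<union> (\<lambda>F. F \<inter> Hm) ` X \<union> (\<lambda>F. F \<inter> H0) ` X"
    unfolding Z_def Pm_def X_def Hp_def Hm_def H0_def by (rule faces_half_m[OF P])
  have eq0: "{F. F face_of (P \<inter> H0) \<and> F \<noteq> {}} = Z \<union> (\<lambda>F. F \<inter> H0) ` X"
    unfolding Z_def X_def Hp_def Hm_def H0_def by (rule faces_cut[OF P])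
  have injp: "inj_on (\<lambda>F. F \<inter> Hp) X"
  proof (rule inj_onI)
    fix F F' assume F: "F \<in> X" "F' \<in> X" "F \<inter> Hp = F' \<inter> Hp"
    obtain y where y: "y \<in> F" "a \<bullet> y > c" using Xpts[OF F(1)] by blast
    obtain y' where y': "y' \<in> F'" "a \<bullet> y' > c" using Xpts[OF F(2)] by blast
    show "F = F'"
      using inj_half[OF XP[OF F(1)] XP[OF F(2)] y] inj_half[OF XP[OF F(2)] XP[OF F(1)] y'] F(3)
      unfolding Hp_def by blast
  qed
  have injm: "inj_on (\<lambda>F. F \<inter> Hm) X"
  proof (rule inj_onI)
    fix F F' assume F: "F \<in> X" "F' \<in> X" "F \<inter> Hm = F' \<inter> Hm"
    have e: "{x. -c \<le> (-a) \<bullet> x} = Hm" by (auto simp: Hm_def)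
    obtain y where y: "y \<in> F" "(-a) \<bullet> y > -c" using Xpts[OF F(1)] by auto
    obtain y' where y': "y' \<in> F'" "(-a) \<bullet> y' > -c" using Xpts[OF F(2)] by auto
    show "F = F'"
      using inj_half[OF XP[OF F(1)] XP[OF F(2)] y] inj_half[OF XP[OF F(2)] XP[OF F(1)] y'] F(3)
      unfolding e by blast
  qed
  have inj0: "inj_on (\<lambda>F. F \<inter> H0) X"
  proof (rule inj_onI)
    fix F F' assume F: "F \<in> X" "F' \<in> X" "F \<inter> H0 = F' \<inter> H0"
    obtain y z where yz: "y \<in> F" "a \<bullet> y > c" "z \<in> F" "a \<bullet> z < c" using Xpts[OF F(1)] by blast
    obtain y' z' where yz': "y' \<in> F'" "a \<bullet> y' > c" "z' \<in> F'" "a \<bullet> z' < c" using Xpts[OF F(2)] by blast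
    show "F = F'"
      using inj_cut[OF XP[OF F(1)] XP[OF F(2)] yz] inj_cut[OF XP[OF F(2)] XP[OF F(1)] yz'] F(3)
      unfolding H0_def by blast
  qed
  have nfp: "\<not> (F \<inter> Hp) face_of P" "\<not> (F \<inter> Hm) face_of P" "\<not> (F \<inter> H0) face_of P" if FX: "F \<in> X" for F
  proof -
    obtain y z where yz: "y \<in> F" "a \<bullet> y > c" "z \<in> F" "a \<bullet> z < c" using Xpts[OF FX] by blast
    have cF: "convex F" "F \<subseteq> P" using face_of_imp_convex[OF XP[OF FX]] face_of_imp_subset[OF XP[OF FX]] by auto
    show "\<not> (F \<inter> Hp) face_of P" by (rule notface_gen[OF cF yz]) (use yz in \<open>auto simp: Hp_def\<close>)
    show "\<not> (F \<inter> Hm) face_of P" by (rule notface_gen[OF cF yz]) (use yz in \<open>auto simp: Hm_def\<close>)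
    show "\<not> (F \<inter> H0) face_of P" by (rule notface_gen[OF cF yz]) (use yz in \<open>auto simp: H0_def\<close>)
  qed
  have ptp: "\<exists>y \<in> F \<inter> Hp. \<not> y \<in> H0" "\<exists>y \<in> F \<inter> Hm. \<not> y \<in> H0" if "F \<in> X" for F
    using Xpts[OF that] unfolding Hp_def Hm_def H0_def by force+
  have sP: "chiF P = sum w Z + sum w Pp + sum w Pm + sum w X"
  proof -
    have d1: "Z \<inter> Pp = {}" "(Z \<union> Pp) \<inter> Pm = {}" "(Z \<union> Pp \<union> Pm) \<inter> X = {}"
    proof -
      have hh: "Hp \<inter> Hm = H0" by (auto simp: Hp_def Hm_def H0_def)
      have h0: "H0 \<subseteq> Hp" "H0 \<subseteq> Hm" using hh by auto
      show "Z \<inter> Pp = {}" "(Z \<union> Pp) \<inter> Pm = {}" "(Z \<union> Pp \<union> Pm) \<inter> X = {}"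
        unfolding Z_def Pp_def Pm_def X_def using hh h0 by blast+
    qed
    show ?thesis unfolding chi[OF P Pne] eqP
      using finZ d1 by (simp add: sum.union_disjoint)
  qed
  have s1: "chiF (P \<inter> Hp) = sum w Z + sum w Pp + sum (\<lambda>F. w (F \<inter> Hp)) X + sum (\<lambda>F. w (F \<inter> H0)) X"
  proof -
    have d1: "Z \<inter> Pp = {}" unfolding Z_def Pp_def by blast
    have d2: "(Z \<union> Pp) \<inter> (\<lambda>F. F \<inter> Hp) ` X = {}"
      using nfp(1) unfolding Z_def Pp_def by blast
    have d3: "(Z \<union> Pp \<union> (\<lambda>F. F \<inter> Hp) ` X) \<inter> (\<lambda>F. F \<inter> H0) ` X = {}"
    proof -
      have "(Z \<union> Pp) \<inter> (\<lambda>F. F \<inter> H0) ` X = {}" using nfp(3) unfolding Z_def Pp_def by blast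
      moreover have "(\<lambda>F. F \<inter> Hp) ` X \<inter> (\<lambda>F. F \<inter> H0) ` X = {}"
        using ptp(1) by blast
      ultimately show ?thesis by blast
    qed
    have "chiF (P \<inter> Hp) = sum w (Z \<union> Pp \<union> (\<lambda>F. F \<inter> Hp) ` X \<union> (\<lambda>F. F \<inter> H0) ` X)"
      unfolding chi[OF polyP1(1) ne1[folded Hp_def]] eq1 by (rule refl)
    also have "\<dots> = sum w Z + sum w Pp + sum w ((\<lambda>F. F \<inter> Hp) ` X) + sum w ((\<lambda>F. F \<inter> H0) ` X)"
      using finZ d1 d2 d3 by (simp add: sum.union_disjoint)
    also have "\<dots> = sum w Z + sum w Pp + sum (\<lambda>F. w (F \<inter> Hp)) X + sum (\<lambda>F. w (F \<inter> H0)) X"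
      using sum.reindex[OF injp, of w] sum.reindex[OF inj0, of w] by (simp add: comp_def)
    finally show ?thesis .
  qed
  have s2: "chiF (P \<inter> Hm) = sum w Z + sum w Pm + sum (\<lambda>F. w (F \<inter> Hm)) X + sum (\<lambda>F. w (F \<inter> H0)) X"
  proof -
    have d1: "Z \<inter> Pm = {}" unfolding Z_def Pm_def by blast
    have d2: "(Z \<union> Pm) \<inter> (\<lambda>F. F \<inter> Hm) ` X = {}"
      using nfp(2) unfolding Z_def Pm_def by blast
    have d3: "(Z \<union> Pm \<union> (\<lambda>F. F \<inter> Hm) ` X) \<inter> (\<lambda>F. F \<inter> H0) ` X = {}"
    proof -
      have "(Z \<union> Pm) \<inter> (\<lambda>F. F \<inter> H0) ` X = {}" using nfp(3) unfolding Z_def Pm_def by blast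
      moreover have "(\<lambda>F. F \<inter> Hm) ` X \<inter> (\<lambda>F. F \<inter> H0) ` X = {}"
        using ptp(2) by blast
      ultimately show ?thesis by blast
    qed
    have "chiF (P \<inter> Hm) = sum w (Z \<union> Pm \<union> (\<lambda>F. F \<inter> Hm) ` X \<union> (\<lambda>F. F \<inter> H0) ` X)"
      unfolding chi[OF polyP1(2) ne2[folded Hm_def]] eq2 by (rule refl)
    also have "\<dots> = sum w Z + sum w Pm + sum w ((\<lambda>F. F \<inter> Hm) ` X) + sum w ((\<lambda>F. F \<inter> H0) ` X)"
      using finZ d1 d2 d3 by (simp add: sum.union_disjoint)
    also have "\<dots> = sum w Z + sum w Pm + sum (\<lambda>F. w (F \<inter> Hm)) X + sum (\<lambda>F. w (F \<inter> H0)) X"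
      using sum.reindex[OF injm, of w] sum.reindex[OF inj0, of w] by (simp add: comp_def)
    finally show ?thesis .
  qed
  have s0: "chiF (P \<inter> H0) = sum w Z + sum (\<lambda>F. w (F \<inter> H0)) X"
  proof -
    have d: "Z \<inter> (\<lambda>F. F \<inter> H0) ` X = {}" using nfp(3) unfolding Z_def by blast
    have "chiF (P \<inter> H0) = sum w (Z \<union> (\<lambda>F. F \<inter> H0) ` X)"
      unfolding chi[OF polyP1(3) ne0] eq0 ..
    also have "\<dots> = sum w Z + sum (\<lambda>F. w (F \<inter> H0)) X"
      using finZ d sum.reindex[OF inj0, of w] by (simp add: sum.union_disjoint comp_def)
    finally show ?thesis .
  qed
  have trm: "w F = w (F \<inter> Hp) + w (F \<inter> Hm) + w (F \<inter> H0)" if FX: "F \<in> X" for F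
  proof -
    obtain y z where yz: "y \<in> F" "a \<bullet> y > c" "z \<in> F" "a \<bullet> z < c" using Xpts[OF FX] by blast
    have FP: "F face_of P" using XP[OF FX] .
    have cF: "convex F" using face_of_imp_convex[OF FP] .
    have pF: "polytope F" using face_of_polytope_polytope[OF P FP] .
    have pp: "polytope (F \<inter> Hp)" "polytope (F \<inter> Hm)" "polytope (F \<inter> H0)"
      unfolding Hp_def Hm_def H0_def
      by (auto intro!: polytope_Int_polyhedron pF polyhedron_halfspace_ge polyhedron_halfspace_le polyhedron_hyperplane)
    obtain q where q: "q \<in> open_segment y z" "a \<bullet> q = c" using cross_point[OF yz(2,4)] by blast
    have qF: "q \<in> F" using seg_in[OF cF yz(1,3) q(1)] .
    have nes: "F \<noteq> {}" "F \<inter> Hp \<noteq> {}" "F \<inter> Hm \<noteq> {}" "F \<inter> H0 \<noteq> {}"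
      using yz qF q(2) unfolding Hp_def Hm_def H0_def by auto
    have dp: "aff_dim (F \<inter> Hp) = aff_dim F" unfolding Hp_def using dim_half[OF cF yz(1,2)] .
    have dm: "aff_dim (F \<inter> Hm) = aff_dim F"
    proof -
      have e: "{x. -c \<le> (-a) \<bullet> x} = Hm" by (auto simp: Hm_def)
      have "(-a) \<bullet> z > -c" using yz by simp
      from dim_half[OF cF yz(3) this] show ?thesis unfolding e .
    qed
    have d0: "aff_dim (F \<inter> H0) = aff_dim F - 1" unfolding H0_def using dim_cut[OF cF yz] .
    have mk: "(F \<inter> Hp) + (F \<inter> Hm) = F + (F \<inter> H0)"
      unfolding Hp_def Hm_def H0_def by (rule mink_split[OF cF])
    have pc: "pclass (F \<inter> Hp) + pclass (F \<inter> Hm) = pclass F + pclass (F \<inter> H0)"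
      using pclass_plus[OF pp(1) nes(2) pp(2) nes(3)] pclass_plus[OF pF nes(1) pp(3) nes(4)] mk by simp
    show ?thesis
    proof (cases "even (aff_dim F)")
      case True
      then have "\<not> even (aff_dim F - 1)" by simp
      then show ?thesis unfolding w_def dp dm d0 using True pc
        by (simp add: algebra_simps)
    next
      case False
      then have "even (aff_dim F - 1)" by simp
      then show ?thesis unfolding w_def dp dm d0 using False pc
        by (simp add: algebra_simps)
    qed
  qed
  have "sum w X = sum (\<lambda>F. w (F \<inter> Hp)) X + sum (\<lambda>F. w (F \<inter> Hm)) X + sum (\<lambda>F. w (F \<inter> H0)) X"
    using trm by (simp add: sum.distrib[symmetric])
  then show ?thesis
    using sP s1 s2 s0 unfolding Hp_def[symmetric] Hm_def[symmetric] H0_def[symmetric]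
    by (simp add: algebra_simps)
qed

lemma star_gen:
  fixes P :: "'a::euclidean_space set" and a :: 'a and c :: real
  assumes P: "polytope P" and ne1: "P \<inter> {x. a \<bullet> x \<ge> c} \<noteq> {}" and ne2: "P \<inter> {x. a \<bullet> x \<le> c} \<noteq> {}"
  shows "pclass (uminus ` P) + pclass (uminus ` (P \<inter> {x. a \<bullet> x = c}))
           = pclass (uminus ` (P \<inter> {x. a \<bullet> x \<ge> c})) + pclass (uminus ` (P \<inter> {x. a \<bullet> x \<le> c}))"
proof -
  have cP: "convex P" using P polytope_imp_convex by blast
  have lu: "linear (uminus :: 'a \<Rightarrow> 'a)" by (rule linear_uminus)
  have ne0: "P \<inter> {x. a \<bullet> x = c} \<noteq> {}"
  proof -
    obtain u v where "u \<in> P" "a \<bullet> u \<ge> c" "v \<in> P" "a \<bullet> v \<le> c" using ne1 ne2 by auto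
    then obtain q where "q \<in> closed_segment u v" "a \<bullet> q = c" using cross_point_closed by blast
    then show ?thesis using \<open>u \<in> P\<close> \<open>v \<in> P\<close> cP convex_contains_segment by blast
  qed
  have pp: "polytope (P \<inter> {x. a \<bullet> x \<ge> c})" "polytope (P \<inter> {x. a \<bullet> x \<le> c})" "polytope (P \<inter> {x. a \<bullet> x = c})"
    by (auto intro!: polytope_Int_polyhedron P polyhedron_halfspace_ge polyhedron_halfspace_le polyhedron_hyperplane)
  have mk: "uminus ` (P \<inter> {x. a \<bullet> x \<ge> c}) + uminus ` (P \<inter> {x. a \<bullet> x \<le> c})
      = uminus ` P + uminus ` (P \<inter> {x. a \<bullet> x = c})"
  proof -
    have "uminus ` ((P \<inter> {x. a \<bullet> x \<ge> c}) + (P \<inter> {x. a \<bullet> x \<le> c})) = uminus ` (P + (P \<inter> {x. a \<bullet> x = c}))"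
      using mink_split[OF cP, where a=a and c=c] by (rule arg_cong)
    then show ?thesis unfolding uminus_set_plus .
  qed
  have "pclass (uminus ` (P \<inter> {x. a \<bullet> x \<ge> c})) + pclass (uminus ` (P \<inter> {x. a \<bullet> x \<le> c}))
      = pclass (uminus ` (P \<inter> {x. a \<bullet> x \<ge> c}) + uminus ` (P \<inter> {x. a \<bullet> x \<le> c}))"
    by (rule pclass_plus[symmetric], rule polytope_linear_image[OF lu pp(1)], use ne1 in simp,
        rule polytope_linear_image[OF lu pp(2)], use ne2 in simp)
  also have "\<dots> = pclass (uminus ` P + uminus ` (P \<inter> {x. a \<bullet> x = c}))" unfolding mk ..
  also have "\<dots> = pclass (uminus ` P) + pclass (uminus ` (P \<inter> {x. a \<bullet> x = c}))"
  proof (rule pclass_plus)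
    show "polytope (uminus ` P)" by (rule polytope_linear_image[OF lu P])
    show "polytope (uminus ` (P \<inter> {x. a \<bullet> x = c}))" by (rule polytope_linear_image[OF lu pp(3)])
    show "uminus ` P \<noteq> {}" using ne1 by blast
    show "uminus ` (P \<inter> {x. a \<bullet> x = c}) \<noteq> {}" using ne0 by blast
  qed
  finally show ?thesis by simp
qed

lemma grp4:
  fixes cp c0 c1 c2 sp s0 s1 s2 :: "'g::ab_group_add"
  assumes E1: "cp + c0 = c1 + c2" and E2: "sp + s0 = s1 + s2"
  shows "s1 = - c1 \<Longrightarrow> s2 = - c2 \<Longrightarrow> s0 = - c0 \<Longrightarrow> sp = - cp"
    and "sp = - cp \<Longrightarrow> s2 = - c2 \<Longrightarrow> s0 = - c0 \<Longrightarrow> s1 = - c1"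
    and "sp = - cp \<Longrightarrow> s1 = - c1 \<Longrightarrow> s0 = - c0 \<Longrightarrow> s2 = - c2"
    and "sp = - cp \<Longrightarrow> s1 = - c1 \<Longrightarrow> s2 = - c2 \<Longrightarrow> s0 = - c0"
proof -
  show "s1 = - c1 \<Longrightarrow> s2 = - c2 \<Longrightarrow> s0 = - c0 \<Longrightarrow> sp = - cp"
  proof -
    assume h: "s1 = - c1" "s2 = - c2" "s0 = - c0"
    have e2: "sp = s1 + s2 - s0" using E2 by (simp add: eq_diff_eq algebra_simps)
    have e1: "cp = c1 + c2 - c0" using E1 by (simp add: eq_diff_eq algebra_simps)
    have "sp = - c1 + - c2 - - c0" using e2 h by simp
    also have "\<dots> = - (c1 + c2 - c0)" by (simp add: algebra_simps)
    finally show "sp = - cp" using e1 by simp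
  qed
  show "sp = - cp \<Longrightarrow> s2 = - c2 \<Longrightarrow> s0 = - c0 \<Longrightarrow> s1 = - c1"
  proof -
    assume h: "sp = - cp" "s2 = - c2" "s0 = - c0"
    have e2: "s1 = sp + s0 - s2" using E2 by (simp add: eq_diff_eq algebra_simps)
    have e1: "c1 = cp + c0 - c2" using E1 by (simp add: eq_diff_eq algebra_simps)
    have "s1 = - cp + - c0 - - c2" using e2 h by simp
    also have "\<dots> = - (cp + c0 - c2)" by (simp add: algebra_simps)
    finally show "s1 = - c1" using e1 by simp
  qed
  show "sp = - cp \<Longrightarrow> s1 = - c1 \<Longrightarrow> s0 = - c0 \<Longrightarrow> s2 = - c2"
  proof -
    assume h: "sp = - cp" "s1 = - c1" "s0 = - c0"
    have e2: "s2 = sp + s0 - s1" using E2 by (simp add: eq_diff_eq algebra_simps)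
    have e1: "c2 = cp + c0 - c1" using E1 by (simp add: eq_diff_eq algebra_simps)
    have "s2 = - cp + - c0 - - c1" using e2 h by simp
    also have "\<dots> = - (cp + c0 - c1)" by (simp add: algebra_simps)
    finally show "s2 = - c2" using e1 by simp
  qed
  show "sp = - cp \<Longrightarrow> s1 = - c1 \<Longrightarrow> s2 = - c2 \<Longrightarrow> s0 = - c0"
  proof -
    assume h: "sp = - cp" "s1 = - c1" "s2 = - c2"
    have e2: "s0 = s1 + s2 - sp" using E2 by (simp add: eq_diff_eq algebra_simps)
    have e1: "c0 = c1 + c2 - cp" using E1 by (simp add: eq_diff_eq algebra_simps)
    have "s0 = - c1 + - c2 - - cp" using e2 h by simp
    also have "\<dots> = - (c1 + c2 - cp)" by (simp add: algebra_simps)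
    finally show "s0 = - c0" using e1 by simp
  qed
qed

theorem lemma5p5:
  fixes P :: "(real ^ 'n) set" and phi :: "real ^ 'n \<Rightarrow> real" and c :: real
  assumes "polytope P"
    and "linear phi" and "phi \<noteq> (\<lambda>x. 0)"
    and "{p \<in> P. phi p \<ge> c} \<noteq> {}" and "{p \<in> P. phi p \<le> c} \<noteq> {}"
  shows "chiF P + chiF (P \<inter> {x. phi x = c})
           = chiF {p \<in> P. phi p \<ge> c} + chiF {p \<in> P. phi p \<le> c}
         \<and> (star_identity {p \<in> P. phi p \<ge> c} \<and> star_identity {p \<in> P. phi p \<le> c}
              \<and> star_identity (P \<inter> {x. phi x = c}) \<longrightarrow> star_identity P)
         \<and> (star_identity P \<and> star_identity {p \<in> P. phi p \<le> c}
              \<and> star_identity (P \<inter> {x. phi x = c}) \<longrightarrow> star_identity {p \<in> P. phi p \<ge> c})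
         \<and> (star_identity P \<and> star_identity {p \<in> P. phi p \<ge> c}
              \<and> star_identity (P \<inter> {x. phi x = c}) \<longrightarrow> star_identity {p \<in> P. phi p \<le> c})
         \<and> (star_identity P \<and> star_identity {p \<in> P. phi p \<ge> c}
              \<and> star_identity {p \<in> P. phi p \<le> c} \<longrightarrow> star_identity (P \<inter> {x. phi x = c}))"
proof -
  define a where "a = adjoint phi 1"
  have ph: "phi x = a \<bullet> x" for x unfolding a_def by (rule linear_real_inner[OF assms(2)])
  have s1: "{p \<in> P. phi p \<ge> c} = P \<inter> {x. a \<bullet> x \<ge> c}" by (auto simp: ph)
  have s2: "{p \<in> P. phi p \<le> c} = P \<inter> {x. a \<bullet> x \<le> c}" by (auto simp: ph)
  have s0: "P \<inter> {x. phi x = c} = P \<inter> {x. a \<bullet> x = c}" by (auto simp: ph)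
  have ne1: "P \<inter> {x. a \<bullet> x \<ge> c} \<noteq> {}" using assms(4) s1 by simp
  have ne2: "P \<inter> {x. a \<bullet> x \<le> c} \<noteq> {}" using assms(5) s2 by simp
  note E1 = main_gen[OF assms(1) ne1 ne2]
  note E2 = star_gen[OF assms(1) ne1 ne2]
  show ?thesis unfolding s1 s2 s0 star_identity_def
  proof (intro conjI impI)
    show "chiF P + chiF (P \<inter> {x. a \<bullet> x = c}) = chiF (P \<inter> {x. a \<bullet> x \<ge> c}) + chiF (P \<inter> {x. a \<bullet> x \<le> c})"
      by (rule E1)
  next
    assume "pclass (uminus ` (P \<inter> {x. a \<bullet> x \<ge> c})) = - chiF (P \<inter> {x. a \<bullet> x \<ge> c}) \<and>
      pclass (uminus ` (P \<inter> {x. a \<bullet> x \<le> c})) = - chiF (P \<inter> {x. a \<bullet> x \<le> c}) \<and>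
      pclass (uminus ` (P \<inter> {x. a \<bullet> x = c})) = - chiF (P \<inter> {x. a \<bullet> x = c})"
    then show "pclass (uminus ` P) = - chiF P" using grp4(1)[OF E1 E2] by blast
  next
    assume "pclass (uminus ` P) = - chiF P \<and>
      pclass (uminus ` (P \<inter> {x. a \<bullet> x \<le> c})) = - chiF (P \<inter> {x. a \<bullet> x \<le> c}) \<and>
      pclass (uminus ` (P \<inter> {x. a \<bullet> x = c})) = - chiF (P \<inter> {x. a \<bullet> x = c})"
    then show "pclass (uminus ` (P \<inter> {x. a \<bullet> x \<ge> c})) = - chiF (P \<inter> {x. a \<bullet> x \<ge> c})"
      using grp4(2)[OF E1 E2] by blast
  next
    assume "pclass (uminus ` P) = - chiF P \<and>
      pclass (uminus ` (P \<inter> {x. a \<bullet> x \<ge> c})) = - chiF (P \<inter> {x. a \<bullet> x \<ge> c}) \<and>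
      pclass (uminus ` (P \<inter> {x. a \<bullet> x = c})) = - chiF (P \<inter> {x. a \<bullet> x = c})"
    then show "pclass (uminus ` (P \<inter> {x. a \<bullet> x \<le> c})) = - chiF (P \<inter> {x. a \<bullet> x \<le> c})"
      using grp4(3)[OF E1 E2] by blast
  next
    assume "pclass (uminus ` P) = - chiF P \<and>
      pclass (uminus ` (P \<inter> {x. a \<bullet> x \<ge> c})) = - chiF (P \<inter> {x. a \<bullet> x \<ge> c}) \<and>
      pclass (uminus ` (P \<inter> {x. a \<bullet> x \<le> c})) = - chiF (P \<inter> {x. a \<bullet> x \<le> c})"
    then show "pclass (uminus ` (P \<inter> {x. a \<bullet> x = c})) = - chiF (P \<inter> {x. a \<bullet> x = c})"
      using grp4(4)[OF E1 E2] by blast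
  qed

qed

end
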